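(* Let $q$ be a prime power, $\alpha$ a primitive element of $\mathbb{F}_q$, and let $P$ be the $(q-1)\times(q-1)$ matrix over $\mathbb{F}_q$ with rows and columns indexed by $0,1,\dots,q-2$, defined by $P(s,s)=0$ and $P(s,t)=\dfrac{\alpha^s}{\alpha^s-\alpha^t}$ for $s\neq t$. Then every $2\times 2$ submatrix of $P$ is invertible. *)

theory Defs
  imports "HOL-Analysis.Analysis"
begin

definition primitive_element :: "'a::{field,finite} \<Rightarrow> bool" where
  "primitive_element a \<longleftrightarrow> a \<noteq> 0 \<and> (\<forall>x. x \<noteq> 0 \<longrightarrow> (\<exists>k::nat. x = a ^ k))"

definition Pmat :: "'a::{field,finite} \<Rightarrow> nat \<Rightarrow> nat \<Rightarrow> 'a" where
  "Pmat a s t = (if s = t then 0 else a ^ s / (a ^ s - a ^ t))"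

definition submat2 :: "(nat \<Rightarrow> nat \<Rightarrow> 'a) \<Rightarrow> nat \<Rightarrow> nat \<Rightarrow> nat \<Rightarrow> nat \<Rightarrow> 'a ^ 2 ^ 2" where
  "submat2 M s1 s2 t1 t2 =
     (\<chi> i j. M (if i = 1 then s1 else s2) (if j = 1 then t1 else t2))"

end

theory Submission
  imports Defs
begin

lemma pow_inj:
  fixes a :: "'a::{field,finite}"
  assumes pe: "primitive_element a" and ij: "i < j" and j: "j < CARD('a) - 1"
  shows "a ^ i \<noteq> a ^ j"
proof
  assume eq: "a ^ i = a ^ j"
  have a0: "a \<noteq> 0" using pe by (simp add: primitive_element_def)
  define d where "d = j - i"
  have d0: "0 < d" using ij by (simp add: d_def)
  have "a ^ j = a ^ i * a ^ d" using ij by (simp add: d_def flip: power_add)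
  hence ad: "a ^ d = 1" using eq a0 by simp
  have pk: "a ^ k = a ^ (k mod d)" for k
  proof -
    have "a ^ k = a ^ (d * (k div d) + k mod d)" by (simp only: mult_div_mod_eq)
    also have "\<dots> = (a ^ d) ^ (k div d) * a ^ (k mod d)" by (simp only: power_add power_mult)
    finally have "a ^ k = (a ^ d) ^ (k div d) * a ^ (k mod d)" .
    thus ?thesis using ad by simp
  qed
  have sub: "UNIV - {0} \<subseteq> (\<lambda>k. a ^ k) ` {..<d}"
  proof
    fix x :: 'a assume "x \<in> UNIV - {0}"
    then obtain k where "x = a ^ k" using pe by (auto simp: primitive_element_def)
    thus "x \<in> (\<lambda>k. a ^ k) ` {..<d}" using pk[of k] d0 by auto
  qed
  have "card (UNIV - {0::'a}) \<le> card ((\<lambda>k. a ^ k) ` {..<d})"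
    by (rule card_mono[OF _ sub]) auto
  also have "\<dots> \<le> d" using card_image_le[of "{..<d}" "\<lambda>k. a ^ k"] by simp
  finally have "CARD('a) - 1 \<le> d" by (simp add: card_Diff_singleton)
  thus False using j ij by (simp add: d_def)
qed

lemma pow_ne:
  fixes a :: "'a::{field,finite}"
  assumes pe: "primitive_element a" and "i \<noteq> j" "i < CARD('a) - 1" "j < CARD('a) - 1"
  shows "a ^ i \<noteq> a ^ j"
  using pow_inj[OF pe] assms by (metis linorder_neqE_nat)

lemma alg:
  fixes x1 x2 y1 y2 :: "'a::field"
  assumes "x1 \<noteq> 0" "x2 \<noteq> 0" "x1 \<noteq> x2" "y1 \<noteq> y2" "x1 \<noteq> y1" "x1 \<noteq> y2" "x2 \<noteq> y1" "x2 \<noteq> y2"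
  shows "x1 / (x1 - y1) * (x2 / (x2 - y2)) - x1 / (x1 - y2) * (x2 / (x2 - y1)) \<noteq> 0"
proof
  assume h: "x1 / (x1 - y1) * (x2 / (x2 - y2)) - x1 / (x1 - y2) * (x2 / (x2 - y1)) = 0"
  have n: "x1 - y1 \<noteq> 0" "x2 - y2 \<noteq> 0" "x1 - y2 \<noteq> 0" "x2 - y1 \<noteq> 0" using assms by auto
  from h have "x1 * x2 * ((x1 - y2) * (x2 - y1)) = x1 * x2 * ((x1 - y1) * (x2 - y2))"
    using n by (simp add: divide_simps)
  hence "(x1 - y2) * (x2 - y1) = (x1 - y1) * (x2 - y2)" using assms by simp
  hence "(x1 - x2) * (y2 - y1) = 0" by (simp add: algebra_simps)
  thus False using assms by simp
qed

theorem lemma2p17: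
  fixes \<alpha> :: "'a::{field,finite}"
  assumes "primitive_element \<alpha>"
    and "s1 < s2" and "s2 < CARD('a) - 1"
    and "t1 < t2" and "t2 < CARD('a) - 1"
  shows "invertible (submat2 (Pmat \<alpha>) s1 s2 t1 t2)"
proof -
  have a0: "\<alpha> \<noteq> 0" using assms(1) by (simp add: primitive_element_def)
  have ne: "\<And>i j. i \<noteq> j \<Longrightarrow> i < CARD('a) - 1 \<Longrightarrow> j < CARD('a) - 1 \<Longrightarrow> \<alpha> ^ i \<noteq> \<alpha> ^ j"
    using pow_ne[OF assms(1)] by blast
  have d: "det (submat2 (Pmat \<alpha>) s1 s2 t1 t2) =
     Pmat \<alpha> s1 t1 * Pmat \<alpha> s2 t2 - Pmat \<alpha> s1 t2 * Pmat \<alpha> s2 t1"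
    by (simp add: det_2 submat2_def)
  have "Pmat \<alpha> s1 t1 * Pmat \<alpha> s2 t2 - Pmat \<alpha> s1 t2 * Pmat \<alpha> s2 t1 \<noteq> 0"
  proof -
    have r: "\<And>s t. s \<noteq> t \<Longrightarrow> s < CARD('a) - 1 \<Longrightarrow> t < CARD('a) - 1 \<Longrightarrow> Pmat \<alpha> s t \<noteq> 0"
      using ne a0 by (simp add: Pmat_def)
    consider "s1 = t1" | "s1 = t2" | "s2 = t1" | "s2 = t2" | "s1 \<noteq> t1" "s1 \<noteq> t2" "s2 \<noteq> t1" "s2 \<noteq> t2"
      by blast
    thus ?thesis
    proof cases
      case 1
      have "Pmat \<alpha> s1 t1 = 0" using 1 by (simp add: Pmat_def)
      moreover have "Pmat \<alpha> s1 t2 \<noteq> 0" by (rule r) (use 1 assms in auto)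
      moreover have "Pmat \<alpha> s2 t1 \<noteq> 0" by (rule r) (use 1 assms in auto)
      ultimately show ?thesis by simp
    next
      case 2
      have "Pmat \<alpha> s1 t2 = 0" using 2 by (simp add: Pmat_def)
      moreover have "Pmat \<alpha> s1 t1 \<noteq> 0" by (rule r) (use 2 assms in auto)
      moreover have "Pmat \<alpha> s2 t2 \<noteq> 0" by (rule r) (use 2 assms in auto)
      ultimately show ?thesis by simp
    next
      case 3
      have "Pmat \<alpha> s2 t1 = 0" using 3 by (simp add: Pmat_def)
      moreover have "Pmat \<alpha> s1 t1 \<noteq> 0" by (rule r) (use 3 assms in auto)
      moreover have "Pmat \<alpha> s2 t2 \<noteq> 0" by (rule r) (use 3 assms in auto)
      ultimately show ?thesis by simp
    next
      case 4
      have "Pmat \<alpha> s2 t2 = 0" using 4 by (simp add: Pmat_def)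
      moreover have "Pmat \<alpha> s1 t2 \<noteq> 0" by (rule r) (use 4 assms in auto)
      moreover have "Pmat \<alpha> s2 t1 \<noteq> 0" by (rule r) (use 4 assms in auto)
      ultimately show ?thesis by simp
    next
      case 5
      have "\<alpha> ^ s1 / (\<alpha> ^ s1 - \<alpha> ^ t1) * (\<alpha> ^ s2 / (\<alpha> ^ s2 - \<alpha> ^ t2)) -
            \<alpha> ^ s1 / (\<alpha> ^ s1 - \<alpha> ^ t2) * (\<alpha> ^ s2 / (\<alpha> ^ s2 - \<alpha> ^ t1)) \<noteq> 0"
        by (rule alg) (use 5 assms a0 ne in auto)
      thus ?thesis using 5 by (simp add: Pmat_def)
    qed
  qed
  thus ?thesis by (simp add: invertible_det_nz d)
qed

end
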